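(* Let $\alpha: I\to M$ be a unit-speed curve on an oriented surface $M\subset E^3$ with Darboux frame $\{T,V,U\}$ and curvatures $k_g,k_n,\tau_g$. Consider the curve $\gamma$ defined in either of the following two cases: (a) $\tau_g\equiv0$, $k_n$ and $k_g$ nowhere zero, and $\gamma(s)=\alpha(s)+\frac{1}{k_g(s)}V(s)$; (b) $\tau_g$ nowhere zero, $\omega$ an antiderivative of $k_nk_g/\tau_g$, $\Omega$ an antiderivative of $e^{\omega}$, $c_8$ a real constant, $y_1=e^{-\omega}(c_8-\Omega)$, $y_2=-\frac{k_n}{\tau_g}y_1$, and $\gamma(s)=\alpha(s)+y_1(s)T(s)+y_2(s)V(s)$. In either case assume $\gamma$ is regular. Then $\gamma$ is a general helix if and only if $\alpha$ is a relatively normal-slant helix on $M$.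
   Context: $M$ is an oriented surface in Euclidean 3-space $E^3$ and $\alpha:I\to M$ is a unit-speed curve with arc-length parameter $s$. Its Darboux frame $\{T,V,U\}$ consists of the unit tangent $T=\alpha'$, the unit surface normal $U$ of $M$ along $\alpha$, and $V=U\times T$; it satisfies $T'=k_gV+k_nU$, $V'=-k_gT+\tau_gU$, $U'=-k_nT-\tau_gV$, where $k_g,k_n,\tau_g$ are the geodesic curvature, normal curvature and geodesic torsion. A regular curve is a general helix if its unit tangent makes a constant angle with a fixed direction. $\alpha$ is a relatively normal-slant helix if $\langle V,d\rangle$ is constant for some fixed unit vector $d$. *)

theory Defs
  imports "HOL-Analysis.Analysis" "HOL-Analysis.Cross3"
begin

text \<open>T = alpha', U = unit surface normal
  along alpha, V = U x T, and the Darboux equations with k_g, k_n, tau_g.\<close>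
definition darboux_frame ::
  "real set \<Rightarrow> (real \<Rightarrow> real^3) \<Rightarrow> (real \<Rightarrow> real^3) \<Rightarrow> (real \<Rightarrow> real^3) \<Rightarrow> (real \<Rightarrow> real^3)
   \<Rightarrow> (real \<Rightarrow> real) \<Rightarrow> (real \<Rightarrow> real) \<Rightarrow> (real \<Rightarrow> real) \<Rightarrow> bool" where
  "darboux_frame I \<alpha> T V U kg kn tg \<longleftrightarrow>
     (\<forall>s\<in>I.
        (\<alpha> has_vector_derivative T s) (at s) \<and>
        norm (T s) = 1 \<and> norm (U s) = 1 \<and> T s \<bullet> U s = 0 \<and>
        V s = cross3 (U s) (T s) \<and>
        (T has_vector_derivative (kg s *\<^sub>R V s + kn s *\<^sub>R U s)) (at s) \<and>
        (V has_vector_derivative (- kg s *\<^sub>R T s + tg s *\<^sub>R U s)) (at s) \<and>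
        (U has_vector_derivative (- kn s *\<^sub>R T s - tg s *\<^sub>R V s)) (at s))"

definition regular_curve :: "real set \<Rightarrow> (real \<Rightarrow> real^3) \<Rightarrow> bool" where
  "regular_curve I \<gamma> \<longleftrightarrow>
     (\<forall>s\<in>I. \<gamma> differentiable (at s) \<and> vector_derivative \<gamma> (at s) \<noteq> 0)"

definition general_helix :: "real set \<Rightarrow> (real \<Rightarrow> real^3) \<Rightarrow> bool" where
  "general_helix I \<gamma> \<longleftrightarrow> regular_curve I \<gamma> \<and>
     (\<exists>d::real^3. norm d = 1 \<and> (\<exists>c. \<forall>s\<in>I.
        (vector_derivative \<gamma> (at s) /\<^sub>R norm (vector_derivative \<gamma> (at s))) \<bullet> d = c))"

definition rel_normal_slant_helix :: "real set \<Rightarrow> (real \<Rightarrow> real^3) \<Rightarrow> bool" where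
  "rel_normal_slant_helix I V \<longleftrightarrow>
     (\<exists>d::real^3. norm d = 1 \<and> (\<exists>c. \<forall>s\<in>I. V s \<bullet> d = c))"

end

theory Submission imports Defs begin

lemma deriv_no_sign_change_aux:
  fixes h h' :: "real \<Rightarrow> real"
  assumes ab: "a < b"
    and der: "\<And>x. x \<in> {a..b} \<Longrightarrow> (h has_real_derivative h' x) (at x)"
    and nz: "\<And>x. x \<in> {a..b} \<Longrightarrow> h' x \<noteq> 0"
    and pa: "h' a > 0" and nb: "h' b < 0"
  shows False
proof -
  have cont: "continuous_on {a..b} h"
    using der by (meson DERIV_isCont continuous_at_imp_continuous_on)
  obtain c where c: "c \<in> {a..b}" and cmax: "\<And>x. x \<in> {a..b} \<Longrightarrow> h x \<le> h c"
    using continuous_attains_sup[OF compact_Icc _ cont] ab by auto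
  obtain d1 where d1: "d1 > 0" "\<And>t. t > 0 \<Longrightarrow> t < d1 \<Longrightarrow> h a < h (a + t)"
    using DERIV_pos_inc_right[OF der[of a] pa] ab by auto
  obtain d2 where d2: "d2 > 0" "\<And>t. t > 0 \<Longrightarrow> t < d2 \<Longrightarrow> h b < h (b - t)"
    using DERIV_neg_dec_left[OF der[of b] nb] ab by auto
  define t1 where "t1 = min (d1/2) (b - a)"
  have "h a < h (a + t1)" using d1 ab by (intro d1(2)) (auto simp: t1_def)
  also have "\<dots> \<le> h c" using ab d1 by (intro cmax) (auto simp: t1_def)
  finally have ca: "c \<noteq> a" by auto
  define t2 where "t2 = min (d2/2) (b - a)"
  have "h b < h (b - t2)" using d2 ab by (intro d2(2)) (auto simp: t2_def)
  also have "\<dots> \<le> h c" using ab d2 by (intro cmax) (auto simp: t2_def)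
  finally have cb: "c \<noteq> b" by auto
  have "h' c = 0"
  proof (rule DERIV_local_max[OF der[OF c]])
    show "0 < min (c - a) (b - c)" using c ca cb by auto
    show "\<forall>y. \<bar>c - y\<bar> < min (c - a) (b - c) \<longrightarrow> h y \<le> h c"
      by (intro allI impI cmax) auto
  qed
  with nz c show False by auto
qed

lemma deriv_sign_const:
  fixes h h' :: "real \<Rightarrow> real"
  assumes I: "is_interval I"
    and der: "\<And>x. x \<in> I \<Longrightarrow> (h has_real_derivative h' x) (at x)"
    and nz: "\<And>x. x \<in> I \<Longrightarrow> h' x \<noteq> 0"
  shows "(\<forall>x\<in>I. h' x > 0) \<or> (\<forall>x\<in>I. h' x < 0)"
proof (rule ccontr)
  assume "\<not> ?thesis"
  then obtain a b where a0: "a \<in> I" "\<not> h' a > 0" and b0: "b \<in> I" "\<not> h' b < 0"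
    by blast
  have a: "h' a < 0" using a0 nz[of a] by linarith
  have b: "h' b > 0" using b0 nz[of b] by linarith
  have sub: "{min a b..max a b} \<subseteq> I"
  proof
    fix x assume x: "x \<in> {min a b..max a b}"
    show "x \<in> I"
    proof (cases "a \<le> b")
      case True
      then show ?thesis using x mem_is_interval_1_I[OF I a0(1) b0(1), of x] by simp
    next
      case False
      then show ?thesis using x mem_is_interval_1_I[OF I b0(1) a0(1), of x] by simp
    qed
  qed
  show False
  proof (cases "b < a")
    case True
    show False
      by (rule deriv_no_sign_change_aux[OF True, of h h'])
         (use sub der nz a b True in auto)
  next
    case False
    then have ba: "a < b" using a b by (cases "a = b") auto
    have der': "((\<lambda>x. - h x) has_real_derivative - h' x) (at x)" if "x \<in> I" for x
      using der[OF that] by (rule DERIV_minus)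
    show False
      by (rule deriv_no_sign_change_aux[OF ba, of "\<lambda>x. - h x" "\<lambda>x. - h' x"])
         (use sub der' nz a b ba in auto)
  qed
qed

lemma key_helix:
  fixes I :: "real set" and \<gamma> V :: "real \<Rightarrow> real^3" and f :: "real \<Rightarrow> real"
  assumes I: "is_interval I" "open I"
    and Vc: "continuous_on I V"
    and Vn: "\<And>s. s \<in> I \<Longrightarrow> norm (V s) = 1"
    and gd: "\<And>s. s \<in> I \<Longrightarrow> (\<gamma> has_vector_derivative (f s *\<^sub>R V s)) (at s)"
    and regular: "regular_curve I \<gamma>"
  shows "general_helix I \<gamma> \<longleftrightarrow> rel_normal_slant_helix I V"
proof -
  have vd: "vector_derivative \<gamma> (at s) = f s *\<^sub>R V s" if "s \<in> I" for s
    using gd[OF that] by (rule vector_derivative_at)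
  have fnz: "f s \<noteq> 0" if "s \<in> I" for s
    using regular that vd[OF that] unfolding regular_curve_def by auto
  have ut: "vector_derivative \<gamma> (at s) /\<^sub>R norm (vector_derivative \<gamma> (at s)) = sgn (f s) *\<^sub>R V s"
    if "s \<in> I" for s
    using vd[OF that] Vn[OF that] fnz[OF that] by (simp add: sgn_real_def abs_if)
  show ?thesis
  proof
    assume "general_helix I \<gamma>"
    then obtain d c where d: "norm d = 1" and dc: "\<And>s. s \<in> I \<Longrightarrow> sgn (f s) * (V s \<bullet> d) = c"
      unfolding general_helix_def using ut by (metis inner_scaleR_left)
    have fin: "finite ((\<lambda>s. V s \<bullet> d) ` I)"
    proof (rule finite_subset)
      show "(\<lambda>s. V s \<bullet> d) ` I \<subseteq> {c, -c}"
      proof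
        fix y assume "y \<in> (\<lambda>s. V s \<bullet> d) ` I"
        then obtain s where s: "s \<in> I" "y = V s \<bullet> d" by auto
        show "y \<in> {c, -c}"
          using dc[OF s(1)] fnz[OF s(1)] s(2) by (cases "f s > 0") (auto simp: sgn_real_def)
      qed
    qed auto
    have "(\<lambda>s. V s \<bullet> d) constant_on I"
      by (rule continuous_finite_range_constant[OF is_interval_connected[OF I(1)] _ fin])
         (intro continuous_intros Vc)
    then show "rel_normal_slant_helix I V"
      unfolding rel_normal_slant_helix_def constant_on_def using d by blast
  next
    assume "rel_normal_slant_helix I V"
    then obtain d c where d: "norm d = 1" and dc: "\<And>s. s \<in> I \<Longrightarrow> V s \<bullet> d = c"
      unfolding rel_normal_slant_helix_def by blast
    show "general_helix I \<gamma>"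
    proof (cases "c = 0")
      case True
      then show ?thesis unfolding general_helix_def using regular d ut dc
        by (intro conjI exI[of _ d] exI[of _ 0]) auto
    next
      case False
      have hd: "((\<lambda>s. \<gamma> s \<bullet> d) has_real_derivative (f s * c)) (at s)" if "s \<in> I" for s
      proof -
        have "((\<lambda>s. \<gamma> s \<bullet> d) has_vector_derivative ((f s *\<^sub>R V s) \<bullet> d)) (at s)"
          by (rule bounded_linear.has_vector_derivative[OF bounded_linear_inner_left gd[OF that]])
        then show ?thesis using dc[OF that]
          by (simp add: has_real_derivative_iff_has_vector_derivative)
      qed
      have "(\<forall>s\<in>I. f s * c > 0) \<or> (\<forall>s\<in>I. f s * c < 0)"
        by (rule deriv_sign_const[OF I(1) hd]) (use fnz False in auto)
      then obtain \<sigma> where \<sigma>: "\<And>s. s \<in> I \<Longrightarrow> sgn (f s) = \<sigma>"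
      proof
        assume "\<forall>s\<in>I. f s * c > 0"
        then have "\<And>s. s \<in> I \<Longrightarrow> sgn (f s) = sgn c"
          using False by (fastforce simp: sgn_real_def zero_less_mult_iff)
        then show ?thesis using that by blast
      next
        assume "\<forall>s\<in>I. f s * c < 0"
        then have "\<And>s. s \<in> I \<Longrightarrow> sgn (f s) = - sgn c"
          using False by (fastforce simp: sgn_real_def mult_less_0_iff)
        then show ?thesis using that by blast
      qed
      show ?thesis unfolding general_helix_def using regular d ut dc \<sigma>
        by (intro conjI exI[of _ d] exI[of _ "\<sigma> * c"]) auto
    qed
  qed
qed

theorem theorem3p19:
  fixes I :: "real set"
    and \<alpha> T V U \<gamma> :: "real \<Rightarrow> real^3"
    and kg kn tg :: "real \<Rightarrow> real"
  assumes I: "is_interval I" "open I" "I \<noteq> {}"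
    and frame: "darboux_frame I \<alpha> T V U kg kn tg"
    and smooth: "\<forall>s\<in>I. kg differentiable (at s) \<and> kn differentiable (at s) \<and> tg differentiable (at s)"
    and cases:
      "((\<forall>s\<in>I. tg s = 0 \<and> kn s \<noteq> 0 \<and> kg s \<noteq> 0) \<and>
        (\<forall>s\<in>I. \<gamma> s = \<alpha> s + (1 / kg s) *\<^sub>R V s))
       \<or>
       (\<exists>(\<omega>::real \<Rightarrow> real) (\<Omega>::real \<Rightarrow> real) (c8::real).
          (\<forall>s\<in>I. tg s \<noteq> 0) \<and>
          (\<forall>s\<in>I. (\<omega> has_real_derivative (kn s * kg s / tg s)) (at s)) \<and>
          (\<forall>s\<in>I. (\<Omega> has_real_derivative exp (\<omega> s)) (at s)) \<and>
          (\<forall>s\<in>I. \<gamma> s = \<alpha> s + (exp (- \<omega> s) * (c8 - \<Omega> s)) *\<^sub>R T s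
                         + (- (kn s / tg s) * (exp (- \<omega> s) * (c8 - \<Omega> s))) *\<^sub>R V s))"
    and regular: "regular_curve I \<gamma>"
  shows "general_helix I \<gamma> \<longleftrightarrow> rel_normal_slant_helix I V"
proof -
  have fr: "\<And>s. s \<in> I \<Longrightarrow>
        (\<alpha> has_vector_derivative T s) (at s) \<and>
        norm (T s) = 1 \<and> norm (U s) = 1 \<and> T s \<bullet> U s = 0 \<and>
        V s = cross3 (U s) (T s) \<and>
        (T has_vector_derivative (kg s *\<^sub>R V s + kn s *\<^sub>R U s)) (at s) \<and>
        (V has_vector_derivative (- kg s *\<^sub>R T s + tg s *\<^sub>R U s)) (at s) \<and>
        (U has_vector_derivative (- kn s *\<^sub>R T s - tg s *\<^sub>R V s)) (at s)"
    using frame unfolding darboux_frame_def by blast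
  have Vn: "norm (V s) = 1" if "s \<in> I" for s
  proof -
    have "(norm (cross3 (U s) (T s)))\<^sup>2 + (U s \<bullet> T s)\<^sup>2 = (norm (U s) * norm (T s))\<^sup>2"
      by (rule norm_cross_dot)
    then have "(norm (V s))\<^sup>2 = 1" using fr[OF that] by (simp add: inner_commute)
    then show ?thesis by (metis norm_ge_zero power2_eq_1_iff neg_0_le_iff_le le_minus_one_simps(3) order_trans)
  qed
  have Vc: "continuous_on I V"
    using fr by (metis continuous_at_imp_continuous_on has_vector_derivative_continuous)
  have kgd: "(kg has_real_derivative deriv kg s) (at s)" if "s \<in> I" for s
    using smooth that DERIV_deriv_iff_real_differentiable by blast
  have knd: "(kn has_real_derivative deriv kn s) (at s)" if "s \<in> I" for s
    using smooth that DERIV_deriv_iff_real_differentiable by blast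
  have tgd: "(tg has_real_derivative deriv tg s) (at s)" if "s \<in> I" for s
    using smooth that DERIV_deriv_iff_real_differentiable by blast
  obtain f where gd: "\<And>s. s \<in> I \<Longrightarrow> (\<gamma> has_vector_derivative (f s *\<^sub>R V s)) (at s)"
    using cases
  proof
    assume A: "(\<forall>s\<in>I. tg s = 0 \<and> kn s \<noteq> 0 \<and> kg s \<noteq> 0) \<and>
        (\<forall>s\<in>I. \<gamma> s = \<alpha> s + (1 / kg s) *\<^sub>R V s)"
    have "(\<gamma> has_vector_derivative ((- deriv kg s / (kg s)\<^sup>2) *\<^sub>R V s)) (at s)" if s: "s \<in> I" for s
    proof -
      have inv: "((\<lambda>s. 1 / kg s) has_real_derivative (- deriv kg s / (kg s)\<^sup>2)) (at s)"
        using A s kgd[OF s] by (auto intro!: derivative_eq_intros simp: power2_eq_square)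
      have "((\<lambda>s. \<alpha> s + (1 / kg s) *\<^sub>R V s) has_vector_derivative
              (T s + ((1 / kg s) *\<^sub>R (- kg s *\<^sub>R T s + tg s *\<^sub>R U s) + (- deriv kg s / (kg s)\<^sup>2) *\<^sub>R V s))) (at s)"
        using fr[OF s] inv by (intro has_vector_derivative_add has_vector_derivative_scaleR) auto
      also have "T s + ((1 / kg s) *\<^sub>R (- kg s *\<^sub>R T s + tg s *\<^sub>R U s) + (- deriv kg s / (kg s)\<^sup>2) *\<^sub>R V s)
          = (- deriv kg s / (kg s)\<^sup>2) *\<^sub>R V s"
        using A s by (simp add: scaleR_add_right)
      finally show ?thesis
        by (rule has_vector_derivative_transform_within_open[OF _ I(2) s]) (use A in auto)
    qed
    then show ?thesis by (rule that)
  next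
    assume "\<exists>(\<omega>::real \<Rightarrow> real) (\<Omega>::real \<Rightarrow> real) (c8::real).
          (\<forall>s\<in>I. tg s \<noteq> 0) \<and>
          (\<forall>s\<in>I. (\<omega> has_real_derivative (kn s * kg s / tg s)) (at s)) \<and>
          (\<forall>s\<in>I. (\<Omega> has_real_derivative exp (\<omega> s)) (at s)) \<and>
          (\<forall>s\<in>I. \<gamma> s = \<alpha> s + (exp (- \<omega> s) * (c8 - \<Omega> s)) *\<^sub>R T s
                         + (- (kn s / tg s) * (exp (- \<omega> s) * (c8 - \<Omega> s))) *\<^sub>R V s)"
    then obtain \<omega> \<Omega> c8 where tg0: "\<And>s. s \<in> I \<Longrightarrow> tg s \<noteq> 0"
      and \<omega>d: "\<And>s. s \<in> I \<Longrightarrow> (\<omega> has_real_derivative (kn s * kg s / tg s)) (at s)"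
      and \<Omega>d: "\<And>s. s \<in> I \<Longrightarrow> (\<Omega> has_real_derivative exp (\<omega> s)) (at s)"
      and g: "\<And>s. s \<in> I \<Longrightarrow> \<gamma> s = \<alpha> s + (exp (- \<omega> s) * (c8 - \<Omega> s)) *\<^sub>R T s
                         + (- (kn s / tg s) * (exp (- \<omega> s) * (c8 - \<Omega> s))) *\<^sub>R V s"
      by blast
    define y1 where "y1 s = exp (- \<omega> s) * (c8 - \<Omega> s)" for s
    define y2 where "y2 s = - (kn s / tg s) * y1 s" for s
    have "(\<gamma> has_vector_derivative ((y1 s * kg s + deriv y2 s) *\<^sub>R V s)) (at s)" if s: "s \<in> I" for s
    proof -
      have y1d: "(y1 has_real_derivative (- (kn s * kg s / tg s) * y1 s - 1)) (at s)"
      proof -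
        have "(y1 has_real_derivative
            (exp (- \<omega> s) * (- (kn s * kg s / tg s)) * (c8 - \<Omega> s) + exp (- \<omega> s) * (- exp (\<omega> s)))) (at s)"
          unfolding y1_def using \<omega>d[OF s] \<Omega>d[OF s]
          by (auto intro!: derivative_eq_intros)
        moreover have "exp (- \<omega> s) * (- (kn s * kg s / tg s)) * (c8 - \<Omega> s) + exp (- \<omega> s) * (- exp (\<omega> s))
            = - (kn s * kg s / tg s) * y1 s - 1"
          by (simp add: y1_def exp_minus field_simps)
        ultimately show ?thesis by simp
      qed
      have "y2 differentiable (at s)"
        unfolding y2_def[abs_def] real_differentiable_def using knd[OF s] tgd[OF s] tg0[OF s] y1d
        by (intro exI) (auto intro!: derivative_eq_intros)
      then have y2d: "(y2 has_real_derivative deriv y2 s) (at s)"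
        using DERIV_deriv_iff_real_differentiable by blast
      have "((\<lambda>s. \<alpha> s + y1 s *\<^sub>R T s + y2 s *\<^sub>R V s) has_vector_derivative
              (T s + (y1 s *\<^sub>R (kg s *\<^sub>R V s + kn s *\<^sub>R U s) + (- (kn s * kg s / tg s) * y1 s - 1) *\<^sub>R T s)
                + (y2 s *\<^sub>R (- kg s *\<^sub>R T s + tg s *\<^sub>R U s) + deriv y2 s *\<^sub>R V s))) (at s)"
        using fr[OF s] y1d y2d by (intro has_vector_derivative_add has_vector_derivative_scaleR) auto
      also have "(T s + (y1 s *\<^sub>R (kg s *\<^sub>R V s + kn s *\<^sub>R U s) + (- (kn s * kg s / tg s) * y1 s - 1) *\<^sub>R T s)
                + (y2 s *\<^sub>R (- kg s *\<^sub>R T s + tg s *\<^sub>R U s) + deriv y2 s *\<^sub>R V s))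
          = (1 + (- (kn s * kg s / tg s) * y1 s - 1) - y2 s * kg s) *\<^sub>R T s
            + (y1 s * kg s + deriv y2 s) *\<^sub>R V s + (y1 s * kn s + y2 s * tg s) *\<^sub>R U s"
        by (simp add: algebra_simps)
      also have "1 + (- (kn s * kg s / tg s) * y1 s - 1) - y2 s * kg s = 0"
        unfolding y2_def by (simp add: field_simps)
      also have "y1 s * kn s + y2 s * tg s = 0"
        unfolding y2_def using tg0[OF s] by (simp add: field_simps)
      finally have "((\<lambda>s. \<alpha> s + y1 s *\<^sub>R T s + y2 s *\<^sub>R V s) has_vector_derivative
           ((y1 s * kg s + deriv y2 s) *\<^sub>R V s)) (at s)" by simp
      then show ?thesis
        by (rule has_vector_derivative_transform_within_open[OF _ I(2) s])
           (auto simp: g y1_def y2_def)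
    qed
    then show ?thesis by (rule that)
  qed
  show ?thesis
    by (rule key_helix[OF I(1,2) Vc Vn gd regular])
qed

end
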